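(* Let $\mathcal{F}$ be a linear $3$-uniform family and let $\mathcal{M}$ be a maximum matching of $\mathcal{F}$. If $A,B,C$ are three distinct members of $\mathcal{M}$ and $|D_2(A,B)|=8$, then $|D_2(A,C)|+|D_2(B,C)|\leq 12$.
   Context: A family is a finite collection of distinct subsets of a vertex set; $3$-uniform means every member has exactly $3$ elements and linear means any two distinct members share at most one vertex. A matching is a collection of pairwise disjoint members; a maximum matching is one of largest possible size. $X_{\mathcal{M}}=\bigcup_{A\in\mathcal{M}}A$, $D_2(\mathcal{F})=\{E\in\mathcal{F}:|E\cap X_{\mathcal{M}}|=2\}$, and for $A,B\in\mathcal{M}$, $D_2(A,B)=\{E\in D_2(\mathcal{F}): E\cap A\neq\emptyset,\ E\cap B\neq\emptyset\}$. *)

theory Defs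
  imports Main
begin

definition uniform3 :: "'a set set \<Rightarrow> bool" where
  "uniform3 F \<longleftrightarrow> (\<forall>E\<in>F. card E = 3)"

definition linear_family :: "'a set set \<Rightarrow> bool" where
  "linear_family F \<longleftrightarrow> (\<forall>E\<in>F. \<forall>E'\<in>F. E \<noteq> E' \<longrightarrow> card (E \<inter> E') \<le> 1)"

definition matching_of :: "'a set set \<Rightarrow> 'a set set \<Rightarrow> bool" where
  "matching_of F M \<longleftrightarrow> M \<subseteq> F \<and> (\<forall>A\<in>M. \<forall>B\<in>M. A \<noteq> B \<longrightarrow> A \<inter> B = {})"

definition maximum_matching :: "'a set set \<Rightarrow> 'a set set \<Rightarrow> bool" where
  "maximum_matching F M \<longleftrightarrow> matching_of F M \<and>
     (\<forall>M'. matching_of F M' \<longrightarrow> card M' \<le> card M)"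

definition X_M :: "'a set set \<Rightarrow> 'a set" where
  "X_M M = \<Union>M"

definition D2 :: "'a set set \<Rightarrow> 'a set set \<Rightarrow> 'a set set" where
  "D2 F M = {E \<in> F. card (E \<inter> X_M M) = 2}"

definition D2_pair :: "'a set set \<Rightarrow> 'a set set \<Rightarrow> 'a set \<Rightarrow> 'a set \<Rightarrow> 'a set set" where
  "D2_pair F M A B = {E \<in> D2 F M. E \<inter> A \<noteq> {} \<and> E \<inter> B \<noteq> {}}"

end

theory Submission
  imports Defs
begin


lemma card_pairs_sum:
  assumes "finite P" "finite Q"
  shows "card {(u,v). u \<in> P \<and> v \<in> Q \<and> R u v} = (\<Sum>u\<in>P. \<Sum>v\<in>Q. if R u v then 1 else 0)"
proof -
  have "{(u,v). u \<in> P \<and> v \<in> Q \<and> R u v} = Sigma P (\<lambda>u. {v\<in>Q. R u v})" by auto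
  then have "card {(u,v). u \<in> P \<and> v \<in> Q \<and> R u v} = (\<Sum>u\<in>P. card {v\<in>Q. R u v})"
    using assms by simp
  also have "\<dots> = (\<Sum>u\<in>P. \<Sum>v\<in>Q. if R u v then 1 else 0)"
    using assms by (simp add: sum.inter_filter[symmetric])
  finally show ?thesis .
qed

lemma card3_distinct: "card {u,v,x} = 3 \<Longrightarrow> u \<noteq> v \<and> u \<noteq> x \<and> v \<noteq> x"
  by (cases "u = v"; cases "u = x"; cases "v = x") (auto simp: card_insert_if)

locale setting =
  fixes F M :: "'a set set"
  assumes finF: "finite F" and uni: "uniform3 F" and linF: "linear_family F"
    and mm: "maximum_matching F M"
begin

abbreviation "X \<equiv> X_M M"
definition edge where "edge u v x \<longleftrightarrow> x \<notin> X \<and> {u,v,x} \<in> F"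
definition pr where "pr u v \<longleftrightarrow> u \<in> X \<and> v \<in> X \<and> (\<exists>x. edge u v x)"
definition ou where "ou u v = (SOME x. edge u v x)"

lemma pr_edge: "pr u v \<Longrightarrow> edge u v (ou u v)"
  unfolding pr_def ou_def by (metis someI_ex)

lemma MF: "M \<subseteq> F" using mm by (simp add: maximum_matching_def matching_of_def)
lemma Mdisj: "A \<in> M \<Longrightarrow> B \<in> M \<Longrightarrow> A \<noteq> B \<Longrightarrow> A \<inter> B = {}"
  using mm by (simp add: maximum_matching_def matching_of_def)
lemma card3: "E \<in> F \<Longrightarrow> card E = 3" using uni by (simp add: uniform3_def)
lemma finM: "finite M" using MF finF finite_subset by blast
lemma subX: "A \<in> M \<Longrightarrow> A \<subseteq> X" by (auto simp: X_M_def)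

lemma linE:
  assumes "E \<in> F" "E' \<in> F" "E \<noteq> E'" "p \<in> E" "q \<in> E" "p \<in> E'" "q \<in> E'" "p \<noteq> q"
  shows False
proof -
  have "finite E" using card3[OF assms(1)] by (metis card.infinite zero_neq_numeral)
  then have "card {p,q} \<le> card (E \<inter> E')" using assms by (intro card_mono) auto
  moreover have "card (E \<inter> E') \<le> 1" using linF assms by (simp add: linear_family_def)
  ultimately show False using assms(8) by simp
qed

lemma edge_props:
  assumes "pr u v"
  shows "{u,v,ou u v} \<in> F" "ou u v \<notin> X" "u \<in> X" "v \<in> X" "u \<noteq> v" "ou u v \<noteq> u" "ou u v \<noteq> v"
  using pr_edge[OF assms] assms card3_distinct[OF card3, of u v "ou u v"]
  by (auto simp: edge_def pr_def)

lemma lin_out: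
  assumes "pr u v" "pr u' v'"
    and sh: "(u = u' \<and> v \<noteq> v') \<or> (v = v' \<and> u \<noteq> u') \<or> (u = v' \<and> v \<noteq> u') \<or> (v = u' \<and> u \<noteq> v')"
  shows "ou u v \<noteq> ou u' v'"
proof
  assume eq: "ou u v = ou u' v'"
  note e1 = edge_props[OF assms(1)] and e2 = edge_props[OF assms(2)]
  have ne: "{u,v,ou u v} \<noteq> {u',v',ou u' v'}"
  proof
    assume h: "{u,v,ou u v} = {u',v',ou u' v'}"
    have "{u,v,ou u v} \<inter> X = {u,v}" "{u',v',ou u' v'} \<inter> X = {u',v'}" using e1 e2 by auto
    then have "{u,v} = {u',v'}" using h by simp
    then show False using sh e1(5) e2(5) by (auto simp: doubleton_eq_iff)
  qed
  obtain w where w: "w \<in> {u,v}" "w \<in> {u',v'}" using sh by auto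
  have "w \<noteq> ou u v" using w e1 by auto
  then show False
    using linE[OF e1(1) e2(1) ne, of w "ou u v"] w eq by auto
qed

lemma augment:
  assumes R: "R \<subseteq> M" and S: "S \<subseteq> F" "finite S"
    and dS: "\<forall>E\<in>S. \<forall>E'\<in>S. E \<noteq> E' \<longrightarrow> E \<inter> E' = {}"
    and SX: "\<forall>E\<in>S. E \<inter> X \<subseteq> \<Union>R"
    and lt: "card R < card S"
  shows False
proof -
  define M' where "M' = (M - R) \<union> S"
  have finR: "finite R" using R finM finite_subset by blast
  have dR: "D \<inter> \<Union>R = {}" if "D \<in> M - R" for D
    using that R Mdisj by blast
  have disj: "(M - R) \<inter> S = {}"
  proof (rule ccontr)
    assume "(M - R) \<inter> S \<noteq> {}"
    then obtain D where D: "D \<in> M - R" "D \<in> S" by blast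
    have "D \<subseteq> X" using D subX by auto
    then have "D \<subseteq> \<Union>R" using SX D by blast
    then have "D = {}" using dR[OF D(1)] by blast
    then show False using card3 MF D by force
  qed
  have "matching_of F M'"
    unfolding matching_of_def M'_def
  proof (intro conjI ballI impI)
    show "M - R \<union> S \<subseteq> F" using MF S by blast
    fix D D' assume D: "D \<in> M - R \<union> S" and D': "D' \<in> M - R \<union> S" and ne: "D \<noteq> D'"
    show "D \<inter> D' = {}"
    proof -
      { fix P Q assume P: "P \<in> M - R" and Q: "Q \<in> S"
        have "Q \<inter> P \<subseteq> Q \<inter> X" using P subX by auto
        then have "P \<inter> Q = {}" using SX Q dR[OF P] by blast }
      note mix = this
      show ?thesis
      proof (cases "D \<in> S")
        case True
        show ?thesis
        proof (cases "D' \<in> S")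
          case True2: True
          then show ?thesis using True dS ne by blast
        next
          case False
          then have "D' \<in> M - R" using D' by blast
          from mix[OF this True] show ?thesis by blast
        qed
      next
        case False
        then have DM: "D \<in> M - R" using D by blast
        show ?thesis
        proof (cases "D' \<in> S")
          case True
          from mix[OF DM True] show ?thesis .
        next
          case False
          then have "D' \<in> M - R" using D' by blast
          then show ?thesis using DM Mdisj ne by blast
        qed
      qed
    qed
  qed
  then have "card M' \<le> card M" using mm by (simp add: maximum_matching_def)
  moreover have "card M' = card (M - R) + card S"
    unfolding M'_def using disj finM S by (simp add: card_Un_disjoint)
  moreover have "card (M - R) = card M - card R" using R finR by (simp add: card_Diff_subset)
  moreover have "card R \<le> card M" using R finM by (simp add: card_mono)
  ultimately show False using lt by linarith
qed

lemma disj_edges: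
  assumes "pr u v" "pr u' v'" "distinct [u,v,u',v']" "ou u v \<noteq> ou u' v'"
  shows "{u,v,ou u v} \<inter> {u',v',ou u' v'} = {}"
  using edge_props[OF assms(1)] edge_props[OF assms(2)] assms(3,4) by auto

lemma edge_ne: "pr u v \<Longrightarrow> {u,v,ou u v} \<noteq> {}" by auto

lemma forb4:
  assumes ABC: "A \<in> M" "B \<in> M" "C \<in> M"
    and d: "distinct [u1,v1,u2,v2,u3,v3,u4,v4]"
    and s: "set [u1,v1,u2,v2,u3,v3,u4,v4] \<subseteq> A \<union> B \<union> C"
    and p: "pr u1 v1" "pr u2 v2" "pr u3 v3" "pr u4 v4"
    and o: "distinct [ou u1 v1, ou u2 v2, ou u3 v3, ou u4 v4]"
  shows False
proof -
  define E1 where "E1 = {u1,v1,ou u1 v1}"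
  define E2 where "E2 = {u2,v2,ou u2 v2}"
  define E3 where "E3 = {u3,v3,ou u3 v3}"
  define E4 where "E4 = {u4,v4,ou u4 v4}"
  have i12: "E1 \<inter> E2 = {}" unfolding E1_def E2_def by (rule disj_edges[OF p(1) p(2)]) (use d o in auto)
  have i13: "E1 \<inter> E3 = {}" unfolding E1_def E3_def by (rule disj_edges[OF p(1) p(3)]) (use d o in auto)
  have i14: "E1 \<inter> E4 = {}" unfolding E1_def E4_def by (rule disj_edges[OF p(1) p(4)]) (use d o in auto)
  have i23: "E2 \<inter> E3 = {}" unfolding E2_def E3_def by (rule disj_edges[OF p(2) p(3)]) (use d o in auto)
  have i24: "E2 \<inter> E4 = {}" unfolding E2_def E4_def by (rule disj_edges[OF p(2) p(4)]) (use d o in auto)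
  have i34: "E3 \<inter> E4 = {}" unfolding E3_def E4_def by (rule disj_edges[OF p(3) p(4)]) (use d o in auto)
  have n: "u1 \<in> E1" "u2 \<in> E2" "u3 \<in> E3" "u4 \<in> E4" by (auto simp: E1_def E2_def E3_def E4_def)
  have ne: "E1 \<noteq> E2" "E1 \<noteq> E3" "E1 \<noteq> E4" "E2 \<noteq> E3" "E2 \<noteq> E4" "E3 \<noteq> E4"
    using i12 i13 i14 i23 i24 i34 n by auto
  have c4: "card {E1,E2,E3,E4} = 4" using ne by simp
  have cR: "card {A,B,C} \<le> 3" by (simp add: card_insert_if)
  show False
  proof (rule augment[of "{A,B,C}" "{E1,E2,E3,E4}"])
    show "{A,B,C} \<subseteq> M" using ABC by simp
    show "{E1,E2,E3,E4} \<subseteq> F" using edge_props(1)[OF p(1)] edge_props(1)[OF p(2)] edge_props(1)[OF p(3)] edge_props(1)[OF p(4)]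
      by (simp add: E1_def E2_def E3_def E4_def)
    show "finite {E1,E2,E3,E4}" by simp
    show "\<forall>E\<in>{E1,E2,E3,E4}. \<forall>E'\<in>{E1,E2,E3,E4}. E \<noteq> E' \<longrightarrow> E \<inter> E' = {}"
      using i12 i13 i14 i23 i24 i34 by (auto simp: Int_commute)
    show "\<forall>E\<in>{E1,E2,E3,E4}. E \<inter> X \<subseteq> \<Union>{A,B,C}"
      using s edge_props(2)[OF p(1)] edge_props(2)[OF p(2)] edge_props(2)[OF p(3)] edge_props(2)[OF p(4)]
      by (auto simp: E1_def E2_def E3_def E4_def)
    show "card {A,B,C} < card {E1,E2,E3,E4}" using c4 cR by simp
  qed
qed

lemma forb3:
  assumes PQ: "P \<in> M" "Q \<in> M"
    and d: "distinct [u1,v1,u2,v2,u3,v3]"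
    and s: "set [u1,v1,u2,v2,u3,v3] \<subseteq> P \<union> Q"
    and p: "pr u1 v1" "pr u2 v2" "pr u3 v3"
    and o: "distinct [ou u1 v1, ou u2 v2, ou u3 v3]"
  shows False
proof -
  define E1 where "E1 = {u1,v1,ou u1 v1}"
  define E2 where "E2 = {u2,v2,ou u2 v2}"
  define E3 where "E3 = {u3,v3,ou u3 v3}"
  have i12: "E1 \<inter> E2 = {}" unfolding E1_def E2_def by (rule disj_edges[OF p(1) p(2)]) (use d o in auto)
  have i13: "E1 \<inter> E3 = {}" unfolding E1_def E3_def by (rule disj_edges[OF p(1) p(3)]) (use d o in auto)
  have i23: "E2 \<inter> E3 = {}" unfolding E2_def E3_def by (rule disj_edges[OF p(2) p(3)]) (use d o in auto)
  have n: "u1 \<in> E1" "u2 \<in> E2" "u3 \<in> E3" by (auto simp: E1_def E2_def E3_def)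
  have ne: "E1 \<noteq> E2" "E1 \<noteq> E3" "E2 \<noteq> E3"
    using i12 i13 i23 n by auto
  have c3: "card {E1,E2,E3} = 3" using ne by simp
  have cR: "card {P,Q} \<le> 2" by (simp add: card_insert_if)
  show False
  proof (rule augment[of "{P,Q}" "{E1,E2,E3}"])
    show "{P,Q} \<subseteq> M" using PQ by simp
    show "{E1,E2,E3} \<subseteq> F" using edge_props(1)[OF p(1)] edge_props(1)[OF p(2)] edge_props(1)[OF p(3)]
      by (simp add: E1_def E2_def E3_def)
    show "finite {E1,E2,E3}" by simp
    show "\<forall>E\<in>{E1,E2,E3}. \<forall>E'\<in>{E1,E2,E3}. E \<noteq> E' \<longrightarrow> E \<inter> E' = {}"
      using i12 i13 i23 by (auto simp: Int_commute)
    show "\<forall>E\<in>{E1,E2,E3}. E \<inter> X \<subseteq> \<Union>{P,Q}"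
      using s edge_props(2)[OF p(1)] edge_props(2)[OF p(2)] edge_props(2)[OF p(3)]
      by (auto simp: E1_def E2_def E3_def)
    show "card {P,Q} < card {E1,E2,E3}" using c3 cR by simp
  qed
qed

lemma card_D2:
  assumes P: "P \<in> M" and Q: "Q \<in> M" and PQ: "P \<noteq> Q"
  shows "card (D2_pair F M P Q) = card {(u,v). u \<in> P \<and> v \<in> Q \<and> pr u v}"
proof -
  let ?T = "{(u,v). u \<in> P \<and> v \<in> Q \<and> pr u v}"
  let ?f = "\<lambda>(u,v). {u,v,ou u v}"
  have dPQ: "P \<inter> Q = {}" using Mdisj P Q PQ by blast
  have PX: "P \<subseteq> X" "Q \<subseteq> X" using subX P Q by auto
  have EX: "{u,v,ou u v} \<inter> X = {u,v}" if "pr u v" for u v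
    using edge_props[OF that] by auto
  have inj: "inj_on ?f ?T"
  proof (rule inj_onI)
    fix x y assume x: "x \<in> ?T" and y: "y \<in> ?T" and fxy: "?f x = ?f y"
    obtain u v where xu: "x = (u,v)" "u \<in> P" "v \<in> Q" "pr u v" using x by auto
    obtain u' v' where yu: "y = (u',v')" "u' \<in> P" "v' \<in> Q" "pr u' v'" using y by auto
    have "{u,v} = {u',v'}" using fxy EX[OF xu(4)] EX[OF yu(4)] xu(1) yu(1) by simp
    then have "u = u' \<and> v = v'" using xu yu dPQ by (auto simp: doubleton_eq_iff)
    then show "x = y" using xu yu by simp
  qed
  have img: "?f ` ?T = D2_pair F M P Q"
  proof
    show "?f ` ?T \<subseteq> D2_pair F M P Q"
    proof
      fix E assume "E \<in> ?f ` ?T"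
      then obtain u v where E: "E = {u,v,ou u v}" "u \<in> P" "v \<in> Q" "pr u v" by auto
      have "u \<noteq> v" using edge_props[OF E(4)] by simp
      then show "E \<in> D2_pair F M P Q"
        using E edge_props(1)[OF E(4)] EX[OF E(4)]
        by (auto simp: D2_pair_def D2_def)
    qed
    show "D2_pair F M P Q \<subseteq> ?f ` ?T"
    proof
      fix E assume E: "E \<in> D2_pair F M P Q"
      then have EF: "E \<in> F" and c2: "card (E \<inter> X) = 2" and EP: "E \<inter> P \<noteq> {}" and EQ: "E \<inter> Q \<noteq> {}"
        by (auto simp: D2_pair_def D2_def)
      have c3: "card E = 3" using card3[OF EF] .
      have finE: "finite E" using c3 by (metis card.infinite zero_neq_numeral)
      obtain p where p: "p \<in> E" "p \<in> P" using EP by blast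
      obtain q where q: "q \<in> E" "q \<in> Q" using EQ by blast
      have pq: "p \<noteq> q" using p q dPQ by blast
      have sub: "{p,q} \<subseteq> E \<inter> X" using p q PX by auto
      have EXeq: "E \<inter> X = {p,q}"
        using card_subset_eq[OF _ sub] finE c2 pq by (metis card_2_iff finite_Int)
      have "card (E - X) = 1"
        using card_Diff_subset_Int[of E X] finE c2 c3 by simp
      then obtain x where x: "E - X = {x}" by (auto simp: card_Suc_eq)
      have xE: "x \<in> E" "x \<notin> X" using x by auto
      have pX: "p \<in> X" "q \<in> X" using sub by auto
      have Eeq: "E = {p,q,x}"
      proof -
        have "E = (E \<inter> X) \<union> (E - X)" by blast
        then show ?thesis using EXeq x by auto
      qed
      have prpq: "pr p q" using EF Eeq xE pX by (auto simp: pr_def edge_def)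
      have "ou p q = x"
      proof (rule ccontr)
        assume ne: "ou p q \<noteq> x"
        have "{p,q,ou p q} \<noteq> {p,q,x}" using ne edge_props[OF prpq] xE pX by auto
        then show False
          using linE[OF edge_props(1)[OF prpq], of "{p,q,x}" p q] EF Eeq pq by auto
      qed
      then have "E = ?f (p,q)" using Eeq by simp
      moreover have "(p,q) \<in> ?T" using p q prpq by simp
      ultimately show "E \<in> ?f ` ?T" by blast
    qed
  qed
  show ?thesis using card_image[OF inj] img by simp
qed

end



declare [[smt_timeout = 600]]

lemma abstructS:
  fixes pr :: "'v \<Rightarrow> 'v \<Rightarrow> bool" and ou :: "'v \<Rightarrow> 'v \<Rightarrow> 'b"
    and ap aq ar bp bq br cp cq cr :: 'v and XA XB XC :: "'v set"
  assumes dist: "distinct [ap,aq,ar,bp,bq,br,cp,cq,cr]"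
    and XA: "XA = {ap,aq,ar}" and XB: "XB = {bp,bq,br}" and XC: "XC = {cp,cq,cr}"
    and lin: "\<And>u v u' v'. pr u v \<Longrightarrow> pr u' v' \<Longrightarrow> (u = u' \<and> v \<noteq> v') \<or> (v = v' \<and> u \<noteq> u') \<or> (u = v' \<and> v \<noteq> u') \<or> (v = u' \<and> u \<noteq> v') \<Longrightarrow> ou u v \<noteq> ou u' v'"
    and forb4: "\<And>u1 v1 u2 v2 u3 v3 u4 v4. distinct [u1,v1,u2,v2,u3,v3,u4,v4] \<Longrightarrow> set [u1,v1,u2,v2,u3,v3,u4,v4] \<subseteq> XA \<union> XB \<union> XC \<Longrightarrow> pr u1 v1 \<Longrightarrow> pr u2 v2 \<Longrightarrow> pr u3 v3 \<Longrightarrow> pr u4 v4 \<Longrightarrow> distinct [ou u1 v1, ou u2 v2, ou u3 v3, ou u4 v4] \<Longrightarrow> False"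
    and forb3: "\<And>P Q u1 v1 u2 v2 u3 v3. P \<in> {XA,XB,XC} \<Longrightarrow> Q \<in> {XA,XB,XC} \<Longrightarrow> distinct [u1,v1,u2,v2,u3,v3] \<Longrightarrow> set [u1,v1,u2,v2,u3,v3] \<subseteq> P \<union> Q \<Longrightarrow> pr u1 v1 \<Longrightarrow> pr u2 v2 \<Longrightarrow> pr u3 v3 \<Longrightarrow> distinct [ou u1 v1, ou u2 v2, ou u3 v3] \<Longrightarrow> False"
    and AB: "pr ap bp" "pr ap bq" "pr ap br" "pr aq bp" "pr aq bq" "pr aq br" "pr ar bp" "pr ar bq"
    and nAB: "\<not> pr ar br"
  shows "((ou ap br) = (ou aq bp) \<and> (ou ap bq) = (ou aq br) \<and> (ou aq bq) = (ou ar bp) \<and> (ou ap bp) = (ou ar bq) \<and> (ou ap br) \<noteq> (ou ap bq) \<and> (ou ap br) \<noteq> (ou aq bq) \<and> (ou ap br) \<noteq> (ou ap bp) \<and> (ou ap bq) \<noteq> (ou aq bq) \<and> (ou ap bq) \<noteq> (ou ap bp) \<and> (ou aq bq) \<noteq> (ou ap bp)) \<or> ((ou ap br) = (ou aq bq) \<and> (ou ap bp) = (ou aq br) \<and> (ou ap bq) = (ou ar bp) \<and> (ou aq bp) = (ou ar bq) \<and> (ou ap br) \<noteq> (ou ap bp) \<and> (ou ap br) \<noteq> (ou ap bq) \<and> (ou ap br) \<noteq> (ou aq bp) \<and> (ou ap bp) \<noteq> (ou ap bq) \<and> (ou ap bp) \<noteq> (ou aq bp) \<and> (ou ap bq) \<noteq>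 (ou aq bp))"
proof -
  have dd: "ap \<noteq> aq" "ap \<noteq> ar" "ap \<noteq> bp" "ap \<noteq> bq" "ap \<noteq> br" "ap \<noteq> cp" "ap \<noteq> cq" "ap \<noteq> cr" "aq \<noteq> ap" "aq \<noteq> ar" "aq \<noteq> bp" "aq \<noteq> bq" "aq \<noteq> br" "aq \<noteq> cp" "aq \<noteq> cq" "aq \<noteq> cr" "ar \<noteq> ap" "ar \<noteq> aq" "ar \<noteq> bp" "ar \<noteq> bq" "ar \<noteq> br" "ar \<noteq> cp" "ar \<noteq> cq" "ar \<noteq> cr" "bp \<noteq> ap" "bp \<noteq> aq" "bp \<noteq> ar" "bp \<noteq> bq" "bp \<noteq> br" "bp \<noteq> cp" "bp \<noteq> cq" "bp \<noteq> cr" "bq \<noteq> ap" "bq \<noteq> aq" "bq \<noteq> ar" "bq \<noteq> bp" "bq \<noteq> br" "bq \<noteq> cp" "bq \<noteq> cq" "bq \<noteq> cr" "br \<noteq> ap" "br \<noteq> aq" "br \<noteq> ar" "br \<noteq> bp" "br \<noteq> bq" "br \<noteq> cp" "br \<noteq> cq" "br \<noteq> cr" "cp \<noteq> ap" "cp \<noteq> aq" "cp \<noteq> ar" "cp \<noteq> bp" "cp \<noteq> bq" "cp \<noteq> br" "cp \<noteq> cq" "cp \<noteq> cr" "cq \<noteq> ap" "cq \<noteq> aq" "cq \<noteq> ar" "cq \<noteq> bp" "cq \<noteq> bq" "cq \<noteq> br" "cq \<noteq> cp" "cq \<noteq> cr" "cr \<noteq> ap" "cr \<noteq> aq" "cr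 \<noteq> ar" "cr \<noteq> bp" "cr \<noteq> bq" "cr \<noteq> br" "cr \<noteq> cp" "cr \<noteq> cq" using dist by auto
  note [simp] = dd XA XB XC
  show ?thesis
    using AB
      lin[of ap bp ap bq, simplified]
      lin[of ap bp ap br, simplified]
      lin[of ap bp aq bp, simplified]
      lin[of ap bp ar bp, simplified]
      lin[of ap bq ap br, simplified]
      lin[of ap bq aq bq, simplified]
      lin[of ap bq ar bq, simplified]
      lin[of ap br aq br, simplified]
      lin[of aq bp aq bq, simplified]
      lin[of aq bp aq br, simplified]
      lin[of aq bp ar bp, simplified]
      lin[of aq bq aq br, simplified]
      lin[of aq bq ar bq, simplified]
      lin[of ar bp ar bq, simplified]
      forb3[of XA XB ap bp aq br ar bq, simplified]
      forb3[of XA XB ap bq aq br ar bp, simplified]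
      forb3[of XA XB ap br aq bp ar bq, simplified]
      forb3[of XA XB ap br aq bq ar bp, simplified]
    by (smt (z3))
qed

lemma core3S:
  fixes pr :: "'v \<Rightarrow> 'v \<Rightarrow> bool" and ou :: "'v \<Rightarrow> 'v \<Rightarrow> 'b"
    and ap aq ar bp bq br cp cq cr :: 'v and XA XB XC :: "'v set"
  assumes dist: "distinct [ap,aq,ar,bp,bq,br,cp,cq,cr]"
    and XA: "XA = {ap,aq,ar}" and XB: "XB = {bp,bq,br}" and XC: "XC = {cp,cq,cr}"
    and lin: "\<And>u v u' v'. pr u v \<Longrightarrow> pr u' v' \<Longrightarrow> (u = u' \<and> v \<noteq> v') \<or> (v = v' \<and> u \<noteq> u') \<or> (u = v' \<and> v \<noteq> u') \<or> (v = u' \<and> u \<noteq> v') \<Longrightarrow> ou u v \<noteq> ou u' v'"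
    and forb4: "\<And>u1 v1 u2 v2 u3 v3 u4 v4. distinct [u1,v1,u2,v2,u3,v3,u4,v4] \<Longrightarrow> set [u1,v1,u2,v2,u3,v3,u4,v4] \<subseteq> XA \<union> XB \<union> XC \<Longrightarrow> pr u1 v1 \<Longrightarrow> pr u2 v2 \<Longrightarrow> pr u3 v3 \<Longrightarrow> pr u4 v4 \<Longrightarrow> distinct [ou u1 v1, ou u2 v2, ou u3 v3, ou u4 v4] \<Longrightarrow> False"
    and forb3: "\<And>P Q u1 v1 u2 v2 u3 v3. P \<in> {XA,XB,XC} \<Longrightarrow> Q \<in> {XA,XB,XC} \<Longrightarrow> distinct [u1,v1,u2,v2,u3,v3] \<Longrightarrow> set [u1,v1,u2,v2,u3,v3] \<subseteq> P \<union> Q \<Longrightarrow> pr u1 v1 \<Longrightarrow> pr u2 v2 \<Longrightarrow> pr u3 v3 \<Longrightarrow> distinct [ou u1 v1, ou u2 v2, ou u3 v3] \<Longrightarrow> False"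
    and AB: "pr ap bp" "pr ap bq" "pr ap br" "pr aq bp" "pr aq bq" "pr aq br" "pr ar bp" "pr ar bq"
    and S1: "(ou ap br) = (ou aq bp) \<and> (ou ap bq) = (ou aq br) \<and> (ou aq bq) = (ou ar bp) \<and> (ou ap bp) = (ou ar bq) \<and> (ou ap br) \<noteq> (ou ap bq) \<and> (ou ap br) \<noteq> (ou aq bq) \<and> (ou ap br) \<noteq> (ou ap bp) \<and> (ou ap bq) \<noteq> (ou aq bq) \<and> (ou ap bq) \<noteq> (ou ap bp) \<and> (ou aq bq) \<noteq> (ou ap bp)"
  shows "((if pr ap cp then 1 else 0) + (if pr ap cq then 1 else 0) + (if pr ap cr then 1 else 0) + (if pr aq cp then 1 else 0) + (if pr aq cq then 1 else 0) + (if pr aq cr then 1 else 0) + (if pr ar cp then 1 else 0) + (if pr ar cq then 1 else 0) + (if pr ar cr then 1 else 0) + (if pr bp cp then 1 else 0) + (if pr bp cq then 1 else 0) + (if pr bp cr then 1 else 0) + (if pr bq cp then 1 else 0) + (if pr bq cq then 1 else 0) + (if pr bq cr then 1 else 0) + (if pr br cp then 1 else 0) + (if pr br cq then 1 else 0) + (if pr br cr then 1 else 0)) \<le> (12::int)"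
proof -
  have dd: "ap \<noteq> aq" "ap \<noteq> ar" "ap \<noteq> bp" "ap \<noteq> bq" "ap \<noteq> br" "ap \<noteq> cp" "ap \<noteq> cq" "ap \<noteq> cr" "aq \<noteq> ap" "aq \<noteq> ar" "aq \<noteq> bp" "aq \<noteq> bq" "aq \<noteq> br" "aq \<noteq> cp" "aq \<noteq> cq" "aq \<noteq> cr" "ar \<noteq> ap" "ar \<noteq> aq" "ar \<noteq> bp" "ar \<noteq> bq" "ar \<noteq> br" "ar \<noteq> cp" "ar \<noteq> cq" "ar \<noteq> cr" "bp \<noteq> ap" "bp \<noteq> aq" "bp \<noteq> ar" "bp \<noteq> bq" "bp \<noteq> br" "bp \<noteq> cp" "bp \<noteq> cq" "bp \<noteq> cr" "bq \<noteq> ap" "bq \<noteq> aq" "bq \<noteq> ar" "bq \<noteq> bp" "bq \<noteq> br" "bq \<noteq> cp" "bq \<noteq> cq" "bq \<noteq> cr" "br \<noteq> ap" "br \<noteq> aq" "br \<noteq> ar" "br \<noteq> bp" "br \<noteq> bq" "br \<noteq> cp" "br \<noteq> cq" "br \<noteq> cr" "cp \<noteq> ap" "cp \<noteq> aq" "cp \<noteq> ar" "cp \<noteq> bp" "cp \<noteq> bq" "cp \<noteq> br" "cp \<noteq> cq" "cp \<noteq> cr" "cq \<noteq> ap" "cq \<noteq> aq" "cq \<noteq> ar" "cq \<noteq> bp" "cq \<noteq> bq" "cq \<noteq> br" "cq \<noteq> cp" "cq \<noteq> cr" "cr \<noteq> ap" "cr \<noteq> aq" "cr \<noteq> ar" "cr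 \<noteq> bp" "cr \<noteq> bq" "cr \<noteq> br" "cr \<noteq> cp" "cr \<noteq> cq" using dist by auto
  note [simp] = dd XA XB XC
  show ?thesis
    using AB S1
      lin[of ap bp ap cp, simplified]
      lin[of ap bp ap cq, simplified]
      lin[of ap bp ap cr, simplified]
      lin[of ap bp bp cp, simplified]
      lin[of ap bp bp cq, simplified]
      lin[of ap bp bp cr, simplified]
      lin[of ap bq ap cp, simplified]
      lin[of ap bq ap cq, simplified]
      lin[of ap bq ap cr, simplified]
      lin[of ap bq bq cp, simplified]
      lin[of ap bq bq cq, simplified]
      lin[of ap bq bq cr, simplified]
      lin[of ap br ap cp, simplified]
      lin[of ap br ap cq, simplified]
      lin[of ap br ap cr, simplified]
      lin[of ap br br cp, simplified]
      lin[of ap br br cq, simplified]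
      lin[of ap br br cr, simplified]
      lin[of aq bp aq cp, simplified]
      lin[of aq bp aq cq, simplified]
      lin[of aq bp aq cr, simplified]
      lin[of aq bp bp cp, simplified]
      lin[of aq bp bp cq, simplified]
      lin[of aq bp bp cr, simplified]
      lin[of aq bq aq cp, simplified]
      lin[of aq bq aq cq, simplified]
      lin[of aq bq aq cr, simplified]
      lin[of aq bq bq cp, simplified]
      lin[of aq bq bq cq, simplified]
      lin[of aq bq bq cr, simplified]
      lin[of aq br aq cp, simplified]
      lin[of aq br aq cq, simplified]
      lin[of aq br aq cr, simplified]
      lin[of aq br br cp, simplified]
      lin[of aq br br cq, simplified]
      lin[of aq br br cr, simplified]
      lin[of ar bp ar cp, simplified]
      lin[of ar bp ar cq, simplified]
      lin[of ar bp ar cr, simplified]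
      lin[of ar bp bp cp, simplified]
      lin[of ar bp bp cq, simplified]
      lin[of ar bp bp cr, simplified]
      lin[of ar bq ar cp, simplified]
      lin[of ar bq ar cq, simplified]
      lin[of ar bq ar cr, simplified]
      lin[of ar bq bq cp, simplified]
      lin[of ar bq bq cq, simplified]
      lin[of ar bq bq cr, simplified]
      lin[of ap cp ap cq, simplified]
      lin[of ap cp ap cr, simplified]
      lin[of ap cp aq cp, simplified]
      lin[of ap cp ar cp, simplified]
      lin[of ap cp bp cp, simplified]
      lin[of ap cp bq cp, simplified]
      lin[of ap cp br cp, simplified]
      lin[of ap cq ap cr, simplified]
      lin[of ap cq aq cq, simplified]
      lin[of ap cq ar cq, simplified]
      lin[of ap cq bp cq, simplified]
      lin[of ap cq bq cq, simplified]
      lin[of ap cq br cq, simplified]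
      lin[of ap cr aq cr, simplified]
      lin[of ap cr ar cr, simplified]
      lin[of ap cr bp cr, simplified]
      lin[of ap cr bq cr, simplified]
      lin[of ap cr br cr, simplified]
      lin[of aq cp aq cq, simplified]
      lin[of aq cp aq cr, simplified]
      lin[of aq cp ar cp, simplified]
      lin[of aq cp bp cp, simplified]
      lin[of aq cp bq cp, simplified]
      lin[of aq cp br cp, simplified]
      lin[of aq cq aq cr, simplified]
      lin[of aq cq ar cq, simplified]
      lin[of aq cq bp cq, simplified]
      lin[of aq cq bq cq, simplified]
      lin[of aq cq br cq, simplified]
      lin[of aq cr ar cr, simplified]
      lin[of aq cr bp cr, simplified]
      lin[of aq cr bq cr, simplified]
      lin[of aq cr br cr, simplified]
      lin[of ar cp ar cq, simplified]
      lin[of ar cp ar cr, simplified]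
      lin[of ar cp bp cp, simplified]
      lin[of ar cp bq cp, simplified]
      lin[of ar cp br cp, simplified]
      lin[of ar cq ar cr, simplified]
      lin[of ar cq bp cq, simplified]
      lin[of ar cq bq cq, simplified]
      lin[of ar cq br cq, simplified]
      lin[of ar cr bp cr, simplified]
      lin[of ar cr bq cr, simplified]
      lin[of ar cr br cr, simplified]
      lin[of bp cp bp cq, simplified]
      lin[of bp cp bp cr, simplified]
      lin[of bp cp bq cp, simplified]
      lin[of bp cp br cp, simplified]
      lin[of bp cq bp cr, simplified]
      lin[of bp cq bq cq, simplified]
      lin[of bp cq br cq, simplified]
      lin[of bp cr bq cr, simplified]
      lin[of bp cr br cr, simplified]
      lin[of bq cp bq cq, simplified]
      lin[of bq cp bq cr, simplified]
      lin[of bq cp br cp, simplified]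
      lin[of bq cq bq cr, simplified]
      lin[of bq cq br cq, simplified]
      lin[of bq cr br cr, simplified]
      lin[of br cp br cq, simplified]
      lin[of br cp br cr, simplified]
      lin[of br cq br cr, simplified]
      forb4[of ap bp aq bq ar cp br cq, simplified]
      forb4[of ap bp aq bq ar cp br cr, simplified]
      forb4[of ap bp aq bq ar cq br cp, simplified]
      forb4[of ap bp aq bq ar cq br cr, simplified]
      forb4[of ap bp aq bq ar cr br cp, simplified]
      forb4[of ap bp aq bq ar cr br cq, simplified]
      forb4[of ap bp aq br ar cp bq cq, simplified]
      forb4[of ap bp aq br ar cp bq cr, simplified]
      forb4[of ap bp aq br ar cq bq cp, simplified]
      forb4[of ap bp aq br ar cq bq cr, simplified]
      forb4[of ap bp aq br ar cr bq cp, simplified]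
      forb4[of ap bp aq br ar cr bq cq, simplified]
      forb4[of ap bp ar bq aq cp br cq, simplified]
      forb4[of ap bp ar bq aq cp br cr, simplified]
      forb4[of ap bp ar bq aq cq br cp, simplified]
      forb4[of ap bp ar bq aq cq br cr, simplified]
      forb4[of ap bp ar bq aq cr br cp, simplified]
      forb4[of ap bp ar bq aq cr br cq, simplified]
      forb4[of ap bp aq cp ar cq bq cr, simplified]
      forb4[of ap bp aq cp ar cq br cr, simplified]
      forb4[of ap bp aq cp ar cr bq cq, simplified]
      forb4[of ap bp aq cp ar cr br cq, simplified]
      forb4[of ap bp aq cp bq cq br cr, simplified]
      forb4[of ap bp aq cp bq cr br cq, simplified]
      forb4[of ap bp aq cq ar cp bq cr, simplified]
      forb4[of ap bp aq cq ar cp br cr, simplified]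
      forb4[of ap bp aq cq ar cr bq cp, simplified]
      forb4[of ap bp aq cq ar cr br cp, simplified]
      forb4[of ap bp aq cq bq cp br cr, simplified]
      forb4[of ap bp aq cq bq cr br cp, simplified]
      forb4[of ap bp aq cr ar cp bq cq, simplified]
      forb4[of ap bp aq cr ar cp br cq, simplified]
      forb4[of ap bp aq cr ar cq bq cp, simplified]
      forb4[of ap bp aq cr ar cq br cp, simplified]
      forb4[of ap bp aq cr bq cp br cq, simplified]
      forb4[of ap bp aq cr bq cq br cp, simplified]
      forb4[of ap bp ar cp bq cq br cr, simplified]
      forb4[of ap bp ar cp bq cr br cq, simplified]
      forb4[of ap bp ar cq bq cp br cr, simplified]
      forb4[of ap bp ar cq bq cr br cp, simplified]
      forb4[of ap bp ar cr bq cp br cq, simplified]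
      forb4[of ap bp ar cr bq cq br cp, simplified]
      forb4[of ap bq aq bp ar cp br cq, simplified]
      forb4[of ap bq aq bp ar cp br cr, simplified]
      forb4[of ap bq aq bp ar cq br cp, simplified]
      forb4[of ap bq aq bp ar cq br cr, simplified]
      forb4[of ap bq aq bp ar cr br cp, simplified]
      forb4[of ap bq aq bp ar cr br cq, simplified]
      forb4[of ap bq aq br ar cp bp cq, simplified]
      forb4[of ap bq aq br ar cp bp cr, simplified]
      forb4[of ap bq aq br ar cq bp cp, simplified]
      forb4[of ap bq aq br ar cq bp cr, simplified]
      forb4[of ap bq aq br ar cr bp cp, simplified]
      forb4[of ap bq aq br ar cr bp cq, simplified]
      forb4[of ap bq ar bp aq cp br cq, simplified]
      forb4[of ap bq ar bp aq cp br cr, simplified]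
      forb4[of ap bq ar bp aq cq br cp, simplified]
      forb4[of ap bq ar bp aq cq br cr, simplified]
      forb4[of ap bq ar bp aq cr br cp, simplified]
      forb4[of ap bq ar bp aq cr br cq, simplified]
      forb4[of ap bq aq cp ar cq bp cr, simplified]
      forb4[of ap bq aq cp ar cq br cr, simplified]
      forb4[of ap bq aq cp ar cr bp cq, simplified]
      forb4[of ap bq aq cp ar cr br cq, simplified]
      forb4[of ap bq aq cp bp cq br cr, simplified]
      forb4[of ap bq aq cp bp cr br cq, simplified]
      forb4[of ap bq aq cq ar cp bp cr, simplified]
      forb4[of ap bq aq cq ar cp br cr, simplified]
      forb4[of ap bq aq cq ar cr bp cp, simplified]
      forb4[of ap bq aq cq ar cr br cp, simplified]
      forb4[of ap bq aq cq bp cp br cr, simplified]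
      forb4[of ap bq aq cq bp cr br cp, simplified]
      forb4[of ap bq aq cr ar cp bp cq, simplified]
      forb4[of ap bq aq cr ar cp br cq, simplified]
      forb4[of ap bq aq cr ar cq bp cp, simplified]
      forb4[of ap bq aq cr ar cq br cp, simplified]
      forb4[of ap bq aq cr bp cp br cq, simplified]
      forb4[of ap bq aq cr bp cq br cp, simplified]
      forb4[of ap bq ar cp bp cq br cr, simplified]
      forb4[of ap bq ar cp bp cr br cq, simplified]
      forb4[of ap bq ar cq bp cp br cr, simplified]
      forb4[of ap bq ar cq bp cr br cp, simplified]
      forb4[of ap bq ar cr bp cp br cq, simplified]
      forb4[of ap bq ar cr bp cq br cp, simplified]
      forb4[of ap br aq bp ar cp bq cq, simplified]
      forb4[of ap br aq bp ar cp bq cr, simplified]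
      forb4[of ap br aq bp ar cq bq cp, simplified]
      forb4[of ap br aq bp ar cq bq cr, simplified]
      forb4[of ap br aq bp ar cr bq cp, simplified]
      forb4[of ap br aq bp ar cr bq cq, simplified]
      forb4[of ap br aq bq ar cp bp cq, simplified]
      forb4[of ap br aq bq ar cp bp cr, simplified]
      forb4[of ap br aq bq ar cq bp cp, simplified]
      forb4[of ap br aq bq ar cq bp cr, simplified]
      forb4[of ap br aq bq ar cr bp cp, simplified]
      forb4[of ap br aq bq ar cr bp cq, simplified]
      forb4[of ap br ar bp aq cp bq cq, simplified]
      forb4[of ap br ar bp aq cp bq cr, simplified]
      forb4[of ap br ar bp aq cq bq cp, simplified]
      forb4[of ap br ar bp aq cq bq cr, simplified]
      forb4[of ap br ar bp aq cr bq cp, simplified]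
      forb4[of ap br ar bp aq cr bq cq, simplified]
      forb4[of ap br ar bq aq cp bp cq, simplified]
      forb4[of ap br ar bq aq cp bp cr, simplified]
      forb4[of ap br ar bq aq cq bp cp, simplified]
      forb4[of ap br ar bq aq cq bp cr, simplified]
      forb4[of ap br ar bq aq cr bp cp, simplified]
      forb4[of ap br ar bq aq cr bp cq, simplified]
      forb4[of ap br aq cp ar cq bp cr, simplified]
      forb4[of ap br aq cp ar cq bq cr, simplified]
      forb4[of ap br aq cp ar cr bp cq, simplified]
      forb4[of ap br aq cp ar cr bq cq, simplified]
      forb4[of ap br aq cp bp cq bq cr, simplified]
      forb4[of ap br aq cp bp cr bq cq, simplified]
      forb4[of ap br aq cq ar cp bp cr, simplified]
      forb4[of ap br aq cq ar cp bq cr, simplified]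
      forb4[of ap br aq cq ar cr bp cp, simplified]
      forb4[of ap br aq cq ar cr bq cp, simplified]
      forb4[of ap br aq cq bp cp bq cr, simplified]
      forb4[of ap br aq cq bp cr bq cp, simplified]
      forb4[of ap br aq cr ar cp bp cq, simplified]
      forb4[of ap br aq cr ar cp bq cq, simplified]
      forb4[of ap br aq cr ar cq bp cp, simplified]
      forb4[of ap br aq cr ar cq bq cp, simplified]
      forb4[of ap br aq cr bp cp bq cq, simplified]
      forb4[of ap br aq cr bp cq bq cp, simplified]
      forb4[of ap br ar cp bp cq bq cr, simplified]
      forb4[of ap br ar cp bp cr bq cq, simplified]
      forb4[of ap br ar cq bp cp bq cr, simplified]
      forb4[of ap br ar cq bp cr bq cp, simplified]
      forb4[of ap br ar cr bp cp bq cq, simplified]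
      forb4[of ap br ar cr bp cq bq cp, simplified]
      forb4[of aq bp ar bq ap cp br cq, simplified]
      forb4[of aq bp ar bq ap cp br cr, simplified]
      forb4[of aq bp ar bq ap cq br cp, simplified]
      forb4[of aq bp ar bq ap cq br cr, simplified]
      forb4[of aq bp ar bq ap cr br cp, simplified]
      forb4[of aq bp ar bq ap cr br cq, simplified]
      forb4[of aq bp ap cp ar cq bq cr, simplified]
      forb4[of aq bp ap cp ar cq br cr, simplified]
      forb4[of aq bp ap cp ar cr bq cq, simplified]
      forb4[of aq bp ap cp ar cr br cq, simplified]
      forb4[of aq bp ap cp bq cq br cr, simplified]
      forb4[of aq bp ap cp bq cr br cq, simplified]
      forb4[of aq bp ap cq ar cp bq cr, simplified]
      forb4[of aq bp ap cq ar cp br cr, simplified]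
      forb4[of aq bp ap cq ar cr bq cp, simplified]
      forb4[of aq bp ap cq ar cr br cp, simplified]
      forb4[of aq bp ap cq bq cp br cr, simplified]
      forb4[of aq bp ap cq bq cr br cp, simplified]
      forb4[of aq bp ap cr ar cp bq cq, simplified]
      forb4[of aq bp ap cr ar cp br cq, simplified]
      forb4[of aq bp ap cr ar cq bq cp, simplified]
      forb4[of aq bp ap cr ar cq br cp, simplified]
      forb4[of aq bp ap cr bq cp br cq, simplified]
      forb4[of aq bp ap cr bq cq br cp, simplified]
      forb4[of aq bp ar cp bq cq br cr, simplified]
      forb4[of aq bp ar cp bq cr br cq, simplified]
      forb4[of aq bp ar cq bq cp br cr, simplified]
      forb4[of aq bp ar cq bq cr br cp, simplified]
      forb4[of aq bp ar cr bq cp br cq, simplified]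
      forb4[of aq bp ar cr bq cq br cp, simplified]
      forb4[of aq bq ar bp ap cp br cq, simplified]
      forb4[of aq bq ar bp ap cp br cr, simplified]
      forb4[of aq bq ar bp ap cq br cp, simplified]
      forb4[of aq bq ar bp ap cq br cr, simplified]
      forb4[of aq bq ar bp ap cr br cp, simplified]
      forb4[of aq bq ar bp ap cr br cq, simplified]
      forb4[of aq bq ap cp ar cq bp cr, simplified]
      forb4[of aq bq ap cp ar cq br cr, simplified]
      forb4[of aq bq ap cp ar cr bp cq, simplified]
      forb4[of aq bq ap cp ar cr br cq, simplified]
      forb4[of aq bq ap cp bp cq br cr, simplified]
      forb4[of aq bq ap cp bp cr br cq, simplified]
      forb4[of aq bq ap cq ar cp bp cr, simplified]
      forb4[of aq bq ap cq ar cp br cr, simplified]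
      forb4[of aq bq ap cq ar cr bp cp, simplified]
      forb4[of aq bq ap cq ar cr br cp, simplified]
      forb4[of aq bq ap cq bp cp br cr, simplified]
      forb4[of aq bq ap cq bp cr br cp, simplified]
      forb4[of aq bq ap cr ar cp bp cq, simplified]
      forb4[of aq bq ap cr ar cp br cq, simplified]
      forb4[of aq bq ap cr ar cq bp cp, simplified]
      forb4[of aq bq ap cr ar cq br cp, simplified]
      forb4[of aq bq ap cr bp cp br cq, simplified]
      forb4[of aq bq ap cr bp cq br cp, simplified]
      forb4[of aq bq ar cp bp cq br cr, simplified]
      forb4[of aq bq ar cp bp cr br cq, simplified]
      forb4[of aq bq ar cq bp cp br cr, simplified]
      forb4[of aq bq ar cq bp cr br cp, simplified]
      forb4[of aq bq ar cr bp cp br cq, simplified]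
      forb4[of aq bq ar cr bp cq br cp, simplified]
      forb4[of aq br ar bp ap cp bq cq, simplified]
      forb4[of aq br ar bp ap cp bq cr, simplified]
      forb4[of aq br ar bp ap cq bq cp, simplified]
      forb4[of aq br ar bp ap cq bq cr, simplified]
      forb4[of aq br ar bp ap cr bq cp, simplified]
      forb4[of aq br ar bp ap cr bq cq, simplified]
      forb4[of aq br ar bq ap cp bp cq, simplified]
      forb4[of aq br ar bq ap cp bp cr, simplified]
      forb4[of aq br ar bq ap cq bp cp, simplified]
      forb4[of aq br ar bq ap cq bp cr, simplified]
      forb4[of aq br ar bq ap cr bp cp, simplified]
      forb4[of aq br ar bq ap cr bp cq, simplified]
      forb4[of aq br ap cp ar cq bp cr, simplified]
      forb4[of aq br ap cp ar cq bq cr, simplified]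
      forb4[of aq br ap cp ar cr bp cq, simplified]
      forb4[of aq br ap cp ar cr bq cq, simplified]
      forb4[of aq br ap cp bp cq bq cr, simplified]
      forb4[of aq br ap cp bp cr bq cq, simplified]
      forb4[of aq br ap cq ar cp bp cr, simplified]
      forb4[of aq br ap cq ar cp bq cr, simplified]
      forb4[of aq br ap cq ar cr bp cp, simplified]
      forb4[of aq br ap cq ar cr bq cp, simplified]
      forb4[of aq br ap cq bp cp bq cr, simplified]
      forb4[of aq br ap cq bp cr bq cp, simplified]
      forb4[of aq br ap cr ar cp bp cq, simplified]
      forb4[of aq br ap cr ar cp bq cq, simplified]
      forb4[of aq br ap cr ar cq bp cp, simplified]
      forb4[of aq br ap cr ar cq bq cp, simplified]
      forb4[of aq br ap cr bp cp bq cq, simplified]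
      forb4[of aq br ap cr bp cq bq cp, simplified]
      forb4[of aq br ar cp bp cq bq cr, simplified]
      forb4[of aq br ar cp bp cr bq cq, simplified]
      forb4[of aq br ar cq bp cp bq cr, simplified]
      forb4[of aq br ar cq bp cr bq cp, simplified]
      forb4[of aq br ar cr bp cp bq cq, simplified]
      forb4[of aq br ar cr bp cq bq cp, simplified]
      forb4[of ar bp ap cp aq cq bq cr, simplified]
      forb4[of ar bp ap cp aq cq br cr, simplified]
      forb4[of ar bp ap cp aq cr bq cq, simplified]
      forb4[of ar bp ap cp aq cr br cq, simplified]
      forb4[of ar bp ap cp bq cq br cr, simplified]
      forb4[of ar bp ap cp bq cr br cq, simplified]
      forb4[of ar bp ap cq aq cp bq cr, simplified]
      forb4[of ar bp ap cq aq cp br cr, simplified]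
      forb4[of ar bp ap cq aq cr bq cp, simplified]
      forb4[of ar bp ap cq aq cr br cp, simplified]
      forb4[of ar bp ap cq bq cp br cr, simplified]
      forb4[of ar bp ap cq bq cr br cp, simplified]
      forb4[of ar bp ap cr aq cp bq cq, simplified]
      forb4[of ar bp ap cr aq cp br cq, simplified]
      forb4[of ar bp ap cr aq cq bq cp, simplified]
      forb4[of ar bp ap cr aq cq br cp, simplified]
      forb4[of ar bp ap cr bq cp br cq, simplified]
      forb4[of ar bp ap cr bq cq br cp, simplified]
      forb4[of ar bp aq cp bq cq br cr, simplified]
      forb4[of ar bp aq cp bq cr br cq, simplified]
      forb4[of ar bp aq cq bq cp br cr, simplified]
      forb4[of ar bp aq cq bq cr br cp, simplified]
      forb4[of ar bp aq cr bq cp br cq, simplified]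
      forb4[of ar bp aq cr bq cq br cp, simplified]
      forb4[of ar bq ap cp aq cq bp cr, simplified]
      forb4[of ar bq ap cp aq cq br cr, simplified]
      forb4[of ar bq ap cp aq cr bp cq, simplified]
      forb4[of ar bq ap cp aq cr br cq, simplified]
      forb4[of ar bq ap cp bp cq br cr, simplified]
      forb4[of ar bq ap cp bp cr br cq, simplified]
      forb4[of ar bq ap cq aq cp bp cr, simplified]
      forb4[of ar bq ap cq aq cp br cr, simplified]
      forb4[of ar bq ap cq aq cr bp cp, simplified]
      forb4[of ar bq ap cq aq cr br cp, simplified]
      forb4[of ar bq ap cq bp cp br cr, simplified]
      forb4[of ar bq ap cq bp cr br cp, simplified]
      forb4[of ar bq ap cr aq cp bp cq, simplified]
      forb4[of ar bq ap cr aq cp br cq, simplified]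
      forb4[of ar bq ap cr aq cq bp cp, simplified]
      forb4[of ar bq ap cr aq cq br cp, simplified]
      forb4[of ar bq ap cr bp cp br cq, simplified]
      forb4[of ar bq ap cr bp cq br cp, simplified]
      forb4[of ar bq aq cp bp cq br cr, simplified]
      forb4[of ar bq aq cp bp cr br cq, simplified]
      forb4[of ar bq aq cq bp cp br cr, simplified]
      forb4[of ar bq aq cq bp cr br cp, simplified]
      forb4[of ar bq aq cr bp cp br cq, simplified]
      forb4[of ar bq aq cr bp cq br cp, simplified]
      forb3[of XA XC ap cp aq cq ar cr, simplified]
      forb3[of XA XC ap cp aq cr ar cq, simplified]
      forb3[of XA XC ap cq aq cp ar cr, simplified]
      forb3[of XA XC ap cq aq cr ar cp, simplified]
      forb3[of XA XC ap cr aq cp ar cq, simplified]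
      forb3[of XA XC ap cr aq cq ar cp, simplified]
      forb3[of XB XC bp cp bq cq br cr, simplified]
      forb3[of XB XC bp cp bq cr br cq, simplified]
      forb3[of XB XC bp cq bq cp br cr, simplified]
      forb3[of XB XC bp cq bq cr br cp, simplified]
      forb3[of XB XC bp cr bq cp br cq, simplified]
      forb3[of XB XC bp cr bq cq br cp, simplified]
    by (smt (verit))
qed

lemma core_generic:
  fixes pr :: "'v \<Rightarrow> 'v \<Rightarrow> bool" and ou :: "'v \<Rightarrow> 'v \<Rightarrow> 'b"
    and ap aq ar bp bq br cp cq cr :: 'v and XA XB XC :: "'v set"
  assumes dist: "distinct [ap,aq,ar,bp,bq,br,cp,cq,cr]"
    and XA: "XA = {ap,aq,ar}" and XB: "XB = {bp,bq,br}" and XC: "XC = {cp,cq,cr}"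
    and lin: "\<And>u v u' v'. pr u v \<Longrightarrow> pr u' v' \<Longrightarrow> (u = u' \<and> v \<noteq> v') \<or> (v = v' \<and> u \<noteq> u') \<or> (u = v' \<and> v \<noteq> u') \<or> (v = u' \<and> u \<noteq> v') \<Longrightarrow> ou u v \<noteq> ou u' v'"
    and forb4: "\<And>u1 v1 u2 v2 u3 v3 u4 v4. distinct [u1,v1,u2,v2,u3,v3,u4,v4] \<Longrightarrow> set [u1,v1,u2,v2,u3,v3,u4,v4] \<subseteq> XA \<union> XB \<union> XC \<Longrightarrow> pr u1 v1 \<Longrightarrow> pr u2 v2 \<Longrightarrow> pr u3 v3 \<Longrightarrow> pr u4 v4 \<Longrightarrow> distinct [ou u1 v1, ou u2 v2, ou u3 v3, ou u4 v4] \<Longrightarrow> False"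
    and forb3: "\<And>P Q u1 v1 u2 v2 u3 v3. P \<in> {XA,XB,XC} \<Longrightarrow> Q \<in> {XA,XB,XC} \<Longrightarrow> distinct [u1,v1,u2,v2,u3,v3] \<Longrightarrow> set [u1,v1,u2,v2,u3,v3] \<subseteq> P \<union> Q \<Longrightarrow> pr u1 v1 \<Longrightarrow> pr u2 v2 \<Longrightarrow> pr u3 v3 \<Longrightarrow> distinct [ou u1 v1, ou u2 v2, ou u3 v3] \<Longrightarrow> False"
    and AB: "pr ap bp" "pr ap bq" "pr ap br" "pr aq bp" "pr aq bq" "pr aq br" "pr ar bp" "pr ar bq"
    and nAB: "\<not> pr ar br"
  shows "((if pr ap cp then 1 else 0) + (if pr ap cq then 1 else 0) + (if pr ap cr then 1 else 0) + (if pr aq cp then 1 else 0) + (if pr aq cq then 1 else 0) + (if pr aq cr then 1 else 0) + (if pr ar cp then 1 else 0) + (if pr ar cq then 1 else 0) + (if pr ar cr then 1 else 0) + (if pr bp cp then 1 else 0) + (if pr bp cq then 1 else 0) + (if pr bp cr then 1 else 0) + (if pr bq cp then 1 else 0) + (if pr bq cq then 1 else 0) + (if pr bq cr then 1 else 0) + (if pr br cp then 1 else 0) + (if pr br cq then 1 else 0) + (if pr br cr then 1 else 0)) \<le> (12::int)"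
proof -
  have "((ou ap br) = (ou aq bp) \<and> (ou ap bq) = (ou aq br) \<and> (ou aq bq) = (ou ar bp) \<and> (ou ap bp) = (ou ar bq) \<and> (ou ap br) \<noteq> (ou ap bq) \<and> (ou ap br) \<noteq> (ou aq bq) \<and> (ou ap br) \<noteq> (ou ap bp) \<and> (ou ap bq) \<noteq> (ou aq bq) \<and> (ou ap bq) \<noteq> (ou ap bp) \<and> (ou aq bq) \<noteq> (ou ap bp)) \<or> ((ou ap br) = (ou aq bq) \<and> (ou ap bp) = (ou aq br) \<and> (ou ap bq) = (ou ar bp) \<and> (ou aq bp) = (ou ar bq) \<and> (ou ap br) \<noteq> (ou ap bp) \<and> (ou ap br) \<noteq> (ou ap bq) \<and> (ou ap br) \<noteq> (ou aq bp) \<and> (ou ap bp) \<noteq> (ou ap bq) \<and> (ou ap bp) \<noteq> (ou aq bp) \<and> (ou ap bq) \<noteq> (ou aq bp))"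
    by (rule abstructS[OF dist XA XB XC lin forb4 forb3 AB nAB])
  then show ?thesis
  proof
    assume S1: "(ou ap br) = (ou aq bp) \<and> (ou ap bq) = (ou aq br) \<and> (ou aq bq) = (ou ar bp) \<and> (ou ap bp) = (ou ar bq) \<and> (ou ap br) \<noteq> (ou ap bq) \<and> (ou ap br) \<noteq> (ou aq bq) \<and> (ou ap br) \<noteq> (ou ap bp) \<and> (ou ap bq) \<noteq> (ou aq bq) \<and> (ou ap bq) \<noteq> (ou ap bp) \<and> (ou aq bq) \<noteq> (ou ap bp)"
    show ?thesis by (rule core3S[OF dist XA XB XC lin forb4 forb3 AB S1])
  next
    assume S2: "(ou ap br) = (ou aq bq) \<and> (ou ap bp) = (ou aq br) \<and> (ou ap bq) = (ou ar bp) \<and> (ou aq bp) = (ou ar bq) \<and> (ou ap br) \<noteq> (ou ap bp) \<and> (ou ap br) \<noteq> (ou ap bq) \<and> (ou ap br) \<noteq> (ou aq bp) \<and> (ou ap bp) \<noteq> (ou ap bq) \<and> (ou ap bp) \<noteq> (ou aq bp) \<and> (ou ap bq) \<noteq> (ou aq bp)"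
    have "((if pr aq cp then 1 else 0) + (if pr aq cq then 1 else 0) + (if pr aq cr then 1 else 0) + (if pr ap cp then 1 else 0) + (if pr ap cq then 1 else 0) + (if pr ap cr then 1 else 0) + (if pr ar cp then 1 else 0) + (if pr ar cq then 1 else 0) + (if pr ar cr then 1 else 0) + (if pr bp cp then 1 else 0) + (if pr bp cq then 1 else 0) + (if pr bp cr then 1 else 0) + (if pr bq cp then 1 else 0) + (if pr bq cq then 1 else 0) + (if pr bq cr then 1 else 0) + (if pr br cp then 1 else 0) + (if pr br cq then 1 else 0) + (if pr br cr then 1 else 0)) \<le> (12::int)"
      apply (rule core3S[where pr=pr and ou=ou and ap=aq and aq=ap and ar=ar and bp=bp and bq=bq and br=br and cp=cp and cq=cq and cr=cr and XA=XA and XB=XB and XC=XC])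
      subgoal using dist by auto
      subgoal using XA by auto
      subgoal using XB by auto
      subgoal using XC by auto
      subgoal by (fact lin)
      subgoal by (fact forb4)
      subgoal by (fact forb3)
      using AB S2 by auto
    then show ?thesis by linarith
  qed
qed




context setting begin
lemma main_core:
  fixes A B C :: "'a set"
  assumes AM: "A \<in> M" and BM: "B \<in> M" and CM: "C \<in> M"
    and "A \<noteq> B" and "A \<noteq> C" and "B \<noteq> C"
    and c8: "card (D2_pair F M A B) = 8"
  shows "card (D2_pair F M A C) + card (D2_pair F M B C) \<le> 12"
proof -
  have cA: "card A = 3" using card3 MF AM by auto
  have cB: "card B = 3" using card3 MF BM by auto
  have cC: "card C = 3" using card3 MF CM by auto
  have finA: "finite A" using cA by (metis card.infinite zero_neq_numeral)
  have finB: "finite B" using cB by (metis card.infinite zero_neq_numeral)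
  have finC: "finite C" using cC by (metis card.infinite zero_neq_numeral)
  have dAB: "A \<inter> B = {}" using Mdisj AM BM assms by blast
  have dAC: "A \<inter> C = {}" using Mdisj AM CM assms by blast
  have dBC: "B \<inter> C = {}" using Mdisj BM CM assms by blast
  define TAB where "TAB = {(u,v). u \<in> A \<and> v \<in> B \<and> pr u v}"
  have cT: "card TAB = 8" using card_D2[OF AM BM \<open>A \<noteq> B\<close>] c8 TAB_def by simp
  have "TAB \<noteq> A \<times> B"
  proof
    assume "TAB = A \<times> B"
    then have "card TAB = 9" using cA cB by (simp add: card_cartesian_product)
    then show False using cT by simp
  qed
  then obtain ar br where ar: "ar \<in> A" and br: "br \<in> B" and nAB: "\<not> pr ar br"
    unfolding TAB_def by auto
  have "card (A - {ar}) = 2" using cA ar finA by simp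
  then obtain ap aq where a01: "A - {ar} = {ap,aq}" "ap \<noteq> aq" by (auto simp: card_2_iff)
  then have Aeq: "A = {ap,aq,ar}" and a2n: "ar \<noteq> ap" "ar \<noteq> aq" using ar by auto
  have "card (B - {br}) = 2" using cB br finB by simp
  then obtain bp bq where b01: "B - {br} = {bp,bq}" "bp \<noteq> bq" by (auto simp: card_2_iff)
  then have Beq: "B = {bp,bq,br}" and b2n: "br \<noteq> bp" "br \<noteq> bq" using br by auto
  obtain cp cq cr where Ceq: "C = {cp,cq,cr}" and cn: "cp \<noteq> cq" "cq \<noteq> cr" "cp \<noteq> cr"
    using cC by (auto simp: card_3_iff)
  have dist: "distinct [ap,aq,ar,bp,bq,br,cp,cq,cr]"
    using a01 a2n b01 b2n cn dAB dAC dBC Aeq Beq Ceq by auto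
  have dd: "ap \<noteq> aq" "ap \<noteq> ar" "aq \<noteq> ar" "bp \<noteq> bq" "bp \<noteq> br" "bq \<noteq> br"
    "cp \<noteq> cq" "cp \<noteq> cr" "cq \<noteq> cr" using dist by auto
  have "card TAB = (\<Sum>u\<in>A. \<Sum>v\<in>B. if pr u v then 1 else 0)"
    unfolding TAB_def by (rule card_pairs_sum[OF finA finB])
  then have s8: "(if pr ap bp then 1 else 0) + (if pr ap bq then 1 else 0) + (if pr ap br then 1 else 0)
    + (if pr aq bp then 1 else 0) + (if pr aq bq then 1 else 0) + (if pr aq br then 1 else 0)
    + (if pr ar bp then 1 else 0) + (if pr ar bq then 1 else 0) = (8::nat)"
    using cT nAB dd Aeq Beq by simp
  have AB: "pr ap bp" "pr ap bq" "pr ap br" "pr aq bp" "pr aq bq" "pr aq br" "pr ar bp" "pr ar bq"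
    using s8 by (auto split: if_splits)
  have core: "(if pr ap cp then 1 else 0) + (if pr ap cq then 1 else 0) + (if pr ap cr then 1 else 0)
    + (if pr aq cp then 1 else 0) + (if pr aq cq then 1 else 0) + (if pr aq cr then 1 else 0)
    + (if pr ar cp then 1 else 0) + (if pr ar cq then 1 else 0) + (if pr ar cr then 1 else 0)
    + (if pr bp cp then 1 else 0) + (if pr bp cq then 1 else 0) + (if pr bp cr then 1 else 0)
    + (if pr bq cp then 1 else 0) + (if pr bq cq then 1 else 0) + (if pr bq cr then 1 else 0)
    + (if pr br cp then 1 else 0) + (if pr br cq then 1 else 0) + (if pr br cr then 1 else 0) \<le> (12::int)"
    apply (rule core_generic[where pr=pr and ou=ou and ap=ap and aq=aq and ar=ar and bp=bp and bq=bq and br=br and cp=cp and cq=cq and cr=cr and XA=A and XB=B and XC=C])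
    subgoal by (fact dist)
    subgoal by (fact Aeq)
    subgoal by (fact Beq)
    subgoal by (fact Ceq)
    subgoal by (fact lin_out)
    subgoal by (fact forb4[OF AM BM CM])
    subgoal premises prems for P Q u1 v1 u2 v2 u3 v3
    proof -
      have "P \<in> M" "Q \<in> M" using prems(1,2) AM BM CM by auto
      from forb3[OF this prems(3-)] show False .
    qed
    using AB nAB by auto
  have eAC: "card (D2_pair F M A C) = (\<Sum>u\<in>A. \<Sum>v\<in>C. if pr u v then 1 else 0)"
    using card_D2[OF AM CM \<open>A \<noteq> C\<close>] card_pairs_sum[OF finA finC] by simp
  have eBC: "card (D2_pair F M B C) = (\<Sum>u\<in>B. \<Sum>v\<in>C. if pr u v then 1 else 0)"
    using card_D2[OF BM CM \<open>B \<noteq> C\<close>] card_pairs_sum[OF finB finC] by simp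
  have "int (card (D2_pair F M A C)) + int (card (D2_pair F M B C)) = (if pr ap cp then 1 else 0) + (if pr ap cq then 1 else 0) + (if pr ap cr then 1 else 0)
    + (if pr aq cp then 1 else 0) + (if pr aq cq then 1 else 0) + (if pr aq cr then 1 else 0)
    + (if pr ar cp then 1 else 0) + (if pr ar cq then 1 else 0) + (if pr ar cr then 1 else 0)
    + (if pr bp cp then 1 else 0) + (if pr bp cq then 1 else 0) + (if pr bp cr then 1 else 0)
    + (if pr bq cp then 1 else 0) + (if pr bq cq then 1 else 0) + (if pr bq cr then 1 else 0)
    + (if pr br cp then 1 else 0) + (if pr br cq then 1 else 0) + (if pr br cr then 1 else 0)"
    unfolding eAC eBC by (simp add: Aeq Beq Ceq dd if_distrib[of int])
  then have "int (card (D2_pair F M A C)) + int (card (D2_pair F M B C)) \<le> 12"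
    using core by linarith
  then show ?thesis by linarith
qed
end


theorem proposition4:
  fixes F M :: "'a set set" and A B C :: "'a set"
  assumes "finite F"
    and "uniform3 F"
    and "linear_family F"
    and "maximum_matching F M"
    and "A \<in> M" and "B \<in> M" and "C \<in> M"
    and "A \<noteq> B" and "A \<noteq> C" and "B \<noteq> C"
    and "card (D2_pair F M A B) = 8"
  shows "card (D2_pair F M A C) + card (D2_pair F M B C) \<le> 12"
proof -
  interpret setting F M using assms(1-4) by unfold_locales
  show ?thesis using main_core[OF assms(5-11)] .
qed

end
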